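(* Let $\mathcal C$ be a nondegenerate conic section in the projective plane, let $N\ge 2$ be an integer, and let $U,X_1,\dots,X_N,V,Y_N,\dots,Y_1$ be the consecutive vertices of a polygon $UX_1\dots X_NVY_N\dots Y_1$ inscribed in $\mathcal C$. Define the intersection points $A_j=X_jX_{j+1}\cap Y_jY_{j+1}$ for $j=1,\dots,N-1$, and \[ B = UX_1\cap Y_{2n}V,\quad C = UY_1\cap X_{2n}V \quad\text{if } N=2n, \] \[ B = UX_1\cap X_{2n+1}V,\quad C = UY_1\cap Y_{2n+1}V \quad\text{if } N=2n+1. \] If all of the points $A_1,\dots,A_{N-1},B,C$ except possibly one are collinear, then the remaining point lies on the same line as well.
   Context: $PQ$ denotes the line through points $P,Q$, and $\ell\cap m$ the intersection point of two lines. The points are assumed to be such that all the lines and intersection points above are well defined (i.e. in general position). *)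

theory Defs
  imports "HOL-Analysis.Analysis" "HOL-Analysis.Cross3"
begin

text \<open>Real projective plane in homogeneous coordinates: a point is a nonzero vector
  in real^3 (up to nonzero scaling); a line is likewise a nonzero vector l, and
  point P lies on line l iff l \<bullet> P = 0.\<close>

definition proj_same :: "real^3 \<Rightarrow> real^3 \<Rightarrow> bool" where
  "proj_same P Q \<longleftrightarrow> cross3 P Q = 0"

definition pjoin :: "real^3 \<Rightarrow> real^3 \<Rightarrow> real^3" where
  "pjoin P Q = cross3 P Q"

definition pmeet :: "real^3 \<Rightarrow> real^3 \<Rightarrow> real^3" where
  "pmeet l m = cross3 l m"

definition proj_collinear :: "(real^3) set \<Rightarrow> bool" where
  "proj_collinear S \<longleftrightarrow> (\<exists>l::real^3. l \<noteq> 0 \<and> (\<forall>P\<in>S. l \<bullet> P = 0))"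

definition nondeg_conic :: "real^3^3 \<Rightarrow> bool" where
  "nondeg_conic M \<longleftrightarrow> transpose M = M \<and> det M \<noteq> 0"

definition on_conic :: "real^3^3 \<Rightarrow> real^3 \<Rightarrow> bool" where
  "on_conic M P \<longleftrightarrow> P \<bullet> (M *v P) = 0"

end

theory Submission
  imports Defs
begin


definition bf :: "real^3^3 \<Rightarrow> real^3 \<Rightarrow> real^3 \<Rightarrow> real" where
  "bf M x y = x \<bullet> (M *v y)"

definition rf :: "real^3^3 \<Rightarrow> real^3 \<Rightarrow> real^3 \<Rightarrow> real^3" where
  "rf M p z = bf M p p *\<^sub>R z - (2 * bf M p z) *\<^sub>R p"

lemma bf_add1: "bf M (x + y) z = bf M x z + bf M y z" by (simp add: bf_def inner_add_left)
lemma bf_add2: "bf M z (x + y) = bf M z x + bf M z y" by (simp add: bf_def matrix_vector_right_distrib inner_add_right)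
lemma bf_diff1: "bf M (x - y) z = bf M x z - bf M y z" by (simp add: bf_def inner_diff_left)
lemma bf_diff2: "bf M z (x - y) = bf M z x - bf M z y" by (simp add: bf_def matrix_vector_mult_diff_distrib inner_diff_right)
lemma bf_scale1: "bf M (c *\<^sub>R x) z = c * bf M x z" by (simp add: bf_def)
lemma bf_scale2: "bf M z (c *\<^sub>R x) = c * bf M z x" by (simp add: bf_def matrix_vector_mult_scaleR)
lemma bf_zero1[simp]: "bf M 0 z = 0" by (simp add: bf_def)
lemma bf_zero2[simp]: "bf M z 0 = 0" by (simp add: bf_def)
lemma bf_sym: "transpose M = M \<Longrightarrow> bf M x y = bf M y x"
  unfolding bf_def by (metis dot_lmul_matrix inner_commute vector_transpose_matrix)

lemmas bf_lin = bf_add1 bf_add2 bf_diff1 bf_diff2 bf_scale1 bf_scale2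

lemma Minj: "det M \<noteq> 0 \<Longrightarrow> M *v x = 0 \<Longrightarrow> x = (0::real^3)"
proof -
  assume d: "det M \<noteq> 0" and m: "M *v x = 0"
  have "inj ((*v) M)"
    using det_nz_iff_inj[of "(*v) M"] d matrix_vector_mul_linear matrix_of_matrix_vector_mul by metis
  then show ?thesis using m by (metis injD matrix_vector_mult_0_right)
qed



definition stp :: "real \<Rightarrow> real \<Rightarrow> real \<Rightarrow> real \<Rightarrow> real \<Rightarrow> real \<Rightarrow> real \<Rightarrow> real \<times> real \<times> real \<Rightarrow> real \<times> real \<times> real" where
  "stp E F G u v a b w = (case w of (z0, z1, z2) \<Rightarrow>
     (let q = a * a * E + 2 * a * b * F + b * b * G;
          m = z0 * (a * u + b * v) + z1 * (a * E + b * F) + z2 * (a * F + b * G)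
      in (q * z0, q * z1 - 2 * m * a, q * z2 - 2 * m * b)))"

lemma stp_rev3:
  "stp E F G u v a1 b1 (stp E F G u v a2 b2 (stp E F G u v a3 b3 (1,0,0))) =
   stp E F G u v a3 b3 (stp E F G u v a2 b2 (stp E F G u v a1 b1 (1,0,0)))"
  unfolding stp_def Let_def by simp algebra



definition comb :: "real^3 \<Rightarrow> real^3 \<Rightarrow> real^3 \<Rightarrow> real \<times> real \<times> real \<Rightarrow> real^3" where
  "comb z e f w = (case w of (c0, c1, c2) \<Rightarrow> c0 *\<^sub>R z + c1 *\<^sub>R e + c2 *\<^sub>R f)"

lemma rf_comb:
  assumes sym: "transpose M = M"
  shows "rf M (a *\<^sub>R e + b *\<^sub>R f) (comb z e f w) =
    comb z e f (stp (bf M e e) (bf M e f) (bf M f f) (bf M e z) (bf M f z) a b w)"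
proof -
  obtain z0 z1 z2 where w: "w = (z0, z1, z2)" by (cases w) auto
  have s1: "bf M f e = bf M e f" using bf_sym[OF sym] by simp
  have s2: "bf M z e = bf M e z" "bf M z f = bf M f z" using bf_sym[OF sym] by simp_all
  show ?thesis
    unfolding w comb_def stp_def Let_def rf_def
    by (simp add: bf_lin s1 s2 vec_eq_iff algebra_simps)
qed

lemma rev3_basis:
  assumes sym: "transpose M = M"
  shows "rf M (a1 *\<^sub>R e + b1 *\<^sub>R f) (rf M (a2 *\<^sub>R e + b2 *\<^sub>R f) (rf M (a3 *\<^sub>R e + b3 *\<^sub>R f) z))
       = rf M (a3 *\<^sub>R e + b3 *\<^sub>R f) (rf M (a2 *\<^sub>R e + b2 *\<^sub>R f) (rf M (a1 *\<^sub>R e + b1 *\<^sub>R f) z))"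
proof -
  have z: "z = comb z e f (1,0,0)" by (simp add: comb_def)
  show ?thesis
    apply (subst (1 2) z)
    by (simp only: rf_comb[OF sym] stp_rev3)
qed



lemma plane_basis:
  fixes l :: "real^3"
  assumes "l \<noteq> 0"
  shows "\<exists>e f. \<forall>x. l \<bullet> x = 0 \<longrightarrow> (\<exists>a b. x = a *\<^sub>R e + b *\<^sub>R f)"
proof -
  have "l$1 \<noteq> 0 \<or> l$2 \<noteq> 0 \<or> l$3 \<noteq> 0" using assms by (auto simp: vec_eq_iff forall_3)
  moreover {
    assume h: "l$1 \<noteq> 0"
    have "\<forall>x. l \<bullet> x = 0 \<longrightarrow> (\<exists>a b. x = a *\<^sub>R vector [l$2, -(l$1), 0] + b *\<^sub>R vector [l$3, 0, -(l$1)])"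
    proof (intro allI impI)
      fix x :: "real^3" assume d: "l \<bullet> x = 0"
      show "\<exists>a b. x = a *\<^sub>R vector [l$2, -(l$1), 0] + b *\<^sub>R vector [l$3, 0, -(l$1)]"
        apply (rule exI[of _ "-(x$2)/l$1"], rule exI[of _ "-(x$3)/l$1"])
        using d h by (simp add: vec_eq_iff forall_3 vector_def inner_vec_def sum_3 field_simps)
    qed
    hence ?thesis by blast }
  moreover {
    assume h: "l$2 \<noteq> 0"
    have "\<forall>x. l \<bullet> x = 0 \<longrightarrow> (\<exists>a b. x = a *\<^sub>R vector [-(l$2), l$1, 0] + b *\<^sub>R vector [0, l$3, -(l$2)])"
    proof (intro allI impI)
      fix x :: "real^3" assume d: "l \<bullet> x = 0"
      show "\<exists>a b. x = a *\<^sub>R vector [-(l$2), l$1, 0] + b *\<^sub>R vector [0, l$3, -(l$2)]"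
        apply (rule exI[of _ "-(x$1)/l$2"], rule exI[of _ "-(x$3)/l$2"])
        using d h by (simp add: vec_eq_iff forall_3 vector_def inner_vec_def sum_3 field_simps)
    qed
    hence ?thesis by blast }
  moreover {
    assume h: "l$3 \<noteq> 0"
    have "\<forall>x. l \<bullet> x = 0 \<longrightarrow> (\<exists>a b. x = a *\<^sub>R vector [-(l$3), 0, l$1] + b *\<^sub>R vector [0, -(l$3), l$2])"
    proof (intro allI impI)
      fix x :: "real^3" assume d: "l \<bullet> x = 0"
      show "\<exists>a b. x = a *\<^sub>R vector [-(l$3), 0, l$1] + b *\<^sub>R vector [0, -(l$3), l$2]"
        apply (rule exI[of _ "-(x$1)/l$3"], rule exI[of _ "-(x$2)/l$3"])
        using d h by (simp add: vec_eq_iff forall_3 vector_def inner_vec_def sum_3 field_simps)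
    qed
    hence ?thesis by blast }
  ultimately show ?thesis by blast
qed

lemma rev3:
  assumes sym: "transpose M = M" and l: "l \<noteq> 0"
    and "l \<bullet> a = 0" "l \<bullet> b = 0" "l \<bullet> c = 0"
  shows "rf M a (rf M b (rf M c z)) = rf M c (rf M b (rf M a z))"
proof -
  obtain e f where ef: "\<forall>x. l \<bullet> x = 0 \<longrightarrow> (\<exists>a b. x = a *\<^sub>R e + b *\<^sub>R f)"
    using plane_basis[OF l] by blast
  obtain a1 b1 where "a = a1 *\<^sub>R e + b1 *\<^sub>R f" using ef assms by blast
  moreover obtain a2 b2 where "b = a2 *\<^sub>R e + b2 *\<^sub>R f" using ef assms by blast
  moreover obtain a3 b3 where "c = a3 *\<^sub>R e + b3 *\<^sub>R f" using ef assms by blast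
  ultimately show ?thesis using rev3_basis[OF sym] by simp
qed



definition sim :: "real^3 \<Rightarrow> real^3 \<Rightarrow> bool" where
  "sim x y \<longleftrightarrow> (\<exists>c. c \<noteq> 0 \<and> x = c *\<^sub>R y)"

definition prodR :: "real^3^3 \<Rightarrow> (real^3) list \<Rightarrow> real^3 \<Rightarrow> real^3" where
  "prodR M ps z = foldr (rf M) ps z"

lemma sim_refl: "sim x x" unfolding sim_def by (rule exI[of _ 1]) simp
lemma sim_sym: "sim x y \<Longrightarrow> sim y x"
proof -
  assume "sim x y"
  then obtain c where c: "c \<noteq> 0" "x = c *\<^sub>R y" unfolding sim_def by blast
  hence "y = (1/c) *\<^sub>R x" by simp
  thus ?thesis unfolding sim_def using c by (intro exI[of _ "1/c"]) simp
qed
lemma sim_trans: "sim x y \<Longrightarrow> sim y z \<Longrightarrow> sim x z"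
proof -
  assume "sim x y" "sim y z"
  then obtain c d where "c \<noteq> 0" "x = c *\<^sub>R y" "d \<noteq> 0" "y = d *\<^sub>R z" unfolding sim_def by blast
  thus ?thesis unfolding sim_def by (intro exI[of _ "c*d"]) simp
qed
lemma sim_scale: "c \<noteq> 0 \<Longrightarrow> sim x y \<Longrightarrow> sim x (c *\<^sub>R y)"
proof -
  assume c: "c \<noteq> 0" and "sim x y"
  then obtain d where "d \<noteq> 0" "x = d *\<^sub>R y" unfolding sim_def by blast
  thus ?thesis unfolding sim_def using c by (intro exI[of _ "d/c"]) simp
qed
lemma sim_scale2: "c \<noteq> 0 \<Longrightarrow> sim x (c *\<^sub>R y) \<Longrightarrow> sim x y"
proof -
  assume c: "c \<noteq> 0" and "sim x (c *\<^sub>R y)"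
  then obtain d where "d \<noteq> 0" "x = d *\<^sub>R (c *\<^sub>R y)" unfolding sim_def by blast
  thus ?thesis unfolding sim_def using c by (intro exI[of _ "d*c"]) simp
qed
lemma sim_eq: "x = y \<Longrightarrow> sim x y" using sim_refl by simp

lemma rf_scale: "rf M p (c *\<^sub>R z) = c *\<^sub>R rf M p z"
  unfolding rf_def by (simp add: bf_lin algebra_simps)
lemma prodR_scale: "prodR M ps (c *\<^sub>R z) = c *\<^sub>R prodR M ps z"
  unfolding prodR_def by (induction ps) (simp_all add: rf_scale)
lemma prodR_Nil[simp]: "prodR M [] z = z" unfolding prodR_def by simp
lemma prodR_Cons[simp]: "prodR M (p # ps) z = rf M p (prodR M ps z)" unfolding prodR_def by simp
lemma prodR_append: "prodR M (xs @ ys) z = prodR M xs (prodR M ys z)" unfolding prodR_def by simp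

lemma sim_rf: "sim x y \<Longrightarrow> sim (rf M p x) (rf M p y)"
  unfolding sim_def using rf_scale by metis
lemma sim_prodR: "sim x y \<Longrightarrow> sim (prodR M ps x) (prodR M ps y)"
  unfolding sim_def using prodR_scale by metis

lemma rf_sq:
  assumes sym: "transpose M = M"
  shows "rf M p (rf M p z) = (bf M p p)^2 *\<^sub>R z"
proof -
  have s: "bf M z p = bf M p z" using bf_sym[OF sym] by simp
  show ?thesis unfolding rf_def by (simp add: bf_lin s algebra_simps power2_eq_square)
qed

lemma sim_inv:
  assumes sym: "transpose M = M" and q: "bf M p p \<noteq> 0" and h: "sim (rf M p x) y"
  shows "sim (rf M p y) x"
proof -
  have "sim (rf M p (rf M p x)) (rf M p y)" using sim_rf[OF h] .
  hence "sim ((bf M p p)^2 *\<^sub>R x) (rf M p y)" using rf_sq[OF sym] by simp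
  hence "sim (rf M p y) ((bf M p p)^2 *\<^sub>R x)" by (rule sim_sym)
  thus ?thesis using sim_scale2[of "(bf M p p)^2"] q by simp
qed

lemma prodR_cancel:
  assumes sym: "transpose M = M"
  shows "prodR M (rev ps) (prodR M ps z) = (\<Prod>p\<leftarrow>ps. (bf M p p)^2) *\<^sub>R z"
proof (induction ps arbitrary: z)
  case Nil then show ?case by simp
next
  case (Cons p ps)
  have "prodR M (rev (p # ps)) (prodR M (p # ps) z) = prodR M (rev ps) (rf M p (rf M p (prodR M ps z)))"
    by (simp add: prodR_append)
  also have "\<dots> = (bf M p p)^2 *\<^sub>R prodR M (rev ps) (prodR M ps z)"
    by (simp add: rf_sq[OF sym] prodR_scale)
  also have "\<dots> = (\<Prod>p\<leftarrow>p # ps. (bf M p p)^2) *\<^sub>R z" using Cons by (simp add: mult.commute)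
  finally show ?case .
qed

lemma prodR_sim_cancel:
  assumes sym: "transpose M = M" and q: "\<forall>p\<in>set ps. bf M p p \<noteq> 0"
    and h: "sim (prodR M ps x) (prodR M ps y)"
  shows "sim x y"
proof -
  have "sim (prodR M (rev ps) (prodR M ps x)) (prodR M (rev ps) (prodR M ps y))" using sim_prodR[OF h] .
  hence h2: "sim ((\<Prod>p\<leftarrow>ps. (bf M p p)^2) *\<^sub>R x) ((\<Prod>p\<leftarrow>ps. (bf M p p)^2) *\<^sub>R y)"
    by (simp add: prodR_cancel[OF sym])
  have nz: "(\<Prod>p\<leftarrow>ps. (bf M p p)^2) \<noteq> 0" using q by (induction ps) auto
  from h2 nz have "sim ((\<Prod>p\<leftarrow>ps. (bf M p p)^2) *\<^sub>R x) y" using sim_scale2 by blast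
  hence "sim y ((\<Prod>p\<leftarrow>ps. (bf M p p)^2) *\<^sub>R x)" by (rule sim_sym)
  hence "sim y x" using sim_scale2 nz by blast
  thus ?thesis by (rule sim_sym)
qed

lemma comm:
  assumes sym: "transpose M = M" and l: "l \<noteq> 0"
    and ps: "\<forall>p\<in>set ps. l \<bullet> p = 0" and a: "l \<bullet> a = 0" and b: "l \<bullet> b = 0"
  shows "prodR M ps (rf M a (rf M b z)) =
    (if even (length ps) then rf M a (rf M b (prodR M ps z)) else rf M b (rf M a (prodR M ps z)))"
  using ps
proof (induction ps)
  case Nil then show ?case by simp
next
  case (Cons p ps)
  have lp: "l \<bullet> p = 0" using Cons.prems by simp
  show ?case
  proof (cases "even (length ps)")
    case True
    have "prodR M (p # ps) (rf M a (rf M b z)) = rf M p (rf M a (rf M b (prodR M ps z)))"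
      using Cons True by simp
    also have "\<dots> = rf M b (rf M a (rf M p (prodR M ps z)))" using rev3[OF sym l lp a b] .
    finally show ?thesis using True by simp
  next
    case False
    have "prodR M (p # ps) (rf M a (rf M b z)) = rf M p (rf M b (rf M a (prodR M ps z)))"
      using Cons False by simp
    also have "\<dots> = rf M a (rf M b (rf M p (prodR M ps z)))" using rev3[OF sym l lp b a] .
    finally show ?thesis using False by simp
  qed
qed

lemma chain:
  assumes "\<forall>i. a \<le> i \<and> i < m \<longrightarrow> sim (rf M (A i) (X i)) (X (Suc i))" and "a \<le> m"
  shows "sim (prodR M (map A (rev [a..<m])) (X a)) (X m)"
  using assms
proof (induction m)
  case 0 then show ?case by (simp add: sim_refl)
next
  case (Suc m)
  show ?case
  proof (cases "a = Suc m")
    case True then show ?thesis by (simp add: sim_refl)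
  next
    case False
    hence am: "a \<le> m" using Suc.prems by simp
    have ih: "sim (prodR M (map A (rev [a..<m])) (X a)) (X m)" using Suc am by simp
    have "prodR M (map A (rev [a..<Suc m])) (X a) = rf M (A m) (prodR M (map A (rev [a..<m])) (X a))"
      using am by simp
    moreover have "sim (rf M (A m) (prodR M (map A (rev [a..<m])) (X a))) (rf M (A m) (X m))"
      using sim_rf[OF ih] .
    moreover have "sim (rf M (A m) (X m)) (X (Suc m))" using Suc.prems am by simp
    ultimately show ?thesis using sim_trans by metis
  qed
qed



lemma cross_cross: "cross3 x (cross3 y z) = (x \<bullet> z) *\<^sub>R y - (x \<bullet> y) *\<^sub>R z"
  by (simp add: cross3_simps forall_3)

lemma cramer: "(x \<bullet> cross3 y z) *\<^sub>R r = (r \<bullet> cross3 y z) *\<^sub>R x + (x \<bullet> cross3 r z) *\<^sub>R y + (x \<bullet> cross3 y r) *\<^sub>R z"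
  by (simp add: cross3_simps forall_3)

lemma three_normal: "(l \<bullet> x) *\<^sub>R cross3 y z + (l \<bullet> y) *\<^sub>R cross3 z x + (l \<bullet> z) *\<^sub>R cross3 x y = (x \<bullet> cross3 y z) *\<^sub>R l"
  by (simp add: cross3_simps forall_3)

lemma triple_cyc: "x \<bullet> cross3 y z = y \<bullet> cross3 z x" "x \<bullet> cross3 y z = z \<bullet> cross3 x y"
  "x \<bullet> cross3 y z = - (x \<bullet> cross3 z y)"
  by (simp_all add: cross3_simps)

lemma scale_solve: "c \<noteq> 0 \<Longrightarrow> c *\<^sub>R x = y \<Longrightarrow> x = (1/c) *\<^sub>R (y::real^3)"
  by auto

lemma L2:
  assumes "l \<noteq> 0" "l \<bullet> x = 0" "l \<bullet> y = 0" "l \<bullet> z = 0"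
  shows "x \<bullet> cross3 y z = 0"
  using three_normal[of l x y z] assms by simp

lemma par:
  assumes "cross3 x w = 0" "w \<noteq> 0"
  shows "x = ((w \<bullet> x) / (w \<bullet> w)) *\<^sub>R w"
proof -
  have "cross3 w (cross3 x w) = (w \<bullet> w) *\<^sub>R x - (w \<bullet> x) *\<^sub>R w" by (rule cross_cross)
  hence e: "(w \<bullet> w) *\<^sub>R x = (w \<bullet> x) *\<^sub>R w" using assms by simp
  have n: "w \<bullet> w \<noteq> 0" using assms by simp
  have "x = (1 / (w \<bullet> w)) *\<^sub>R ((w \<bullet> x) *\<^sub>R w)" by (rule scale_solve[OF n e])
  thus ?thesis by simp
qed

lemma L0:
  assumes conic: "nondeg_conic M" and P: "on_conic M P" and Q: "on_conic M Q"
    and d: "cross3 P Q \<noteq> 0"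
  shows "bf M P Q \<noteq> 0"
proof
  assume b0: "bf M P Q = 0"
  have sym: "transpose M = M" and dM: "det M \<noteq> 0" using conic by (auto simp: nondeg_conic_def)
  have bs: "bf M Q P = 0" using b0 bf_sym[OF sym] by simp
  have pp: "bf M P P = 0" "bf M Q Q = 0" using P Q by (auto simp: on_conic_def bf_def)
  define w where "w = cross3 P Q"
  have w0: "w \<noteq> 0" using d w_def by simp
  have "cross3 (M *v P) w = ((M *v P) \<bullet> Q) *\<^sub>R P - ((M *v P) \<bullet> P) *\<^sub>R Q"
    unfolding w_def by (rule cross_cross)
  also have "\<dots> = 0" using bs pp by (simp add: bf_def inner_commute)
  finally have c1: "cross3 (M *v P) w = 0" .
  have "cross3 (M *v Q) w = ((M *v Q) \<bullet> Q) *\<^sub>R P - ((M *v Q) \<bullet> P) *\<^sub>R Q"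
    unfolding w_def by (rule cross_cross)
  also have "\<dots> = 0" using b0 pp by (simp add: bf_def inner_commute)
  finally have c2: "cross3 (M *v Q) w = 0" .
  obtain lam where lam: "M *v P = lam *\<^sub>R w" using par[OF c1 w0] by blast
  obtain mu where mu: "M *v Q = mu *\<^sub>R w" using par[OF c2 w0] by blast
  have "M *v (mu *\<^sub>R P - lam *\<^sub>R Q) = 0"
    by (simp add: matrix_vector_mult_diff_distrib matrix_vector_mult_scaleR lam mu)
  hence "mu *\<^sub>R P - lam *\<^sub>R Q = 0" using Minj[OF dM] by blast
  hence e: "mu *\<^sub>R P = lam *\<^sub>R Q" by simp
  have P0: "P \<noteq> 0" using d by auto
  have "M *v P \<noteq> 0" using Minj[OF dM] P0 by blast
  hence ln: "lam \<noteq> 0" using lam by auto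
  have "Q = (1/lam) *\<^sub>R (mu *\<^sub>R P)" by (rule scale_solve[OF ln e[symmetric]])
  hence "Q = (mu / lam) *\<^sub>R P" by simp
  hence "cross3 P Q = 0" by (simp add: cross_mult_right)
  thus False using d by simp
qed

lemma L1:
  assumes conic: "nondeg_conic M" and P: "on_conic M P" and Q: "on_conic M Q" and R: "on_conic M R"
    and d: "cross3 P Q \<noteq> 0" and cop: "P \<bullet> cross3 Q R = 0"
  shows "cross3 R P = 0 \<or> cross3 R Q = 0"
proof -
  have sym: "transpose M = M" using conic by (auto simp: nondeg_conic_def)
  define w where "w = cross3 P Q"
  have ww: "P \<bullet> cross3 Q w = w \<bullet> w" unfolding w_def by (simp add: cross3_simps)
  have w0: "w \<bullet> w \<noteq> 0" using d w_def by simp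
  define al where "al = (R \<bullet> cross3 Q w) / (w \<bullet> w)"
  define be where "be = (P \<bullet> cross3 R w) / (w \<bullet> w)"
  have "(w \<bullet> w) *\<^sub>R R = (R \<bullet> cross3 Q w) *\<^sub>R P + (P \<bullet> cross3 R w) *\<^sub>R Q + (P \<bullet> cross3 Q R) *\<^sub>R w"
    using cramer[of P Q w R] ww by simp
  hence "(w \<bullet> w) *\<^sub>R R = (R \<bullet> cross3 Q w) *\<^sub>R P + (P \<bullet> cross3 R w) *\<^sub>R Q" using cop by simp
  hence "R = (1 / (w \<bullet> w)) *\<^sub>R ((R \<bullet> cross3 Q w) *\<^sub>R P + (P \<bullet> cross3 R w) *\<^sub>R Q)"
    by (rule scale_solve[OF w0])
  hence Rr: "R = al *\<^sub>R P + be *\<^sub>R Q" unfolding al_def be_def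
    by (simp add: scaleR_add_right)
  have pp: "bf M P P = 0" "bf M Q Q = 0" "bf M R R = 0" using P Q R by (auto simp: on_conic_def bf_def)
  have "bf M R R = 2 * al * be * bf M P Q" unfolding Rr using bf_sym[OF sym, of Q P] pp
    by (simp add: bf_lin algebra_simps)
  hence "al * be = 0" using pp L0[OF conic P Q d] by simp
  hence "al = 0 \<or> be = 0" by simp
  thus ?thesis
  proof
    assume "al = 0" hence "R = be *\<^sub>R Q" using Rr by simp
    thus ?thesis by (simp add: cross_mult_left)
  next
    assume "be = 0" hence "R = al *\<^sub>R P" using Rr by simp
    thus ?thesis by (simp add: cross_mult_left)
  qed
qed

lemma L3:
  assumes conic: "nondeg_conic M" and P: "on_conic M P" and Q: "on_conic M Q" and R: "on_conic M R"
    and d1: "cross3 P Q \<noteq> 0" and d2: "cross3 R P \<noteq> 0" and d3: "cross3 R Q \<noteq> 0"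
    and l: "l \<noteq> 0" "l \<bullet> P = 0" "l \<bullet> Q = 0" "l \<bullet> R = 0"
  shows False
  using L1[OF conic P Q R d1 L2[OF l]] d2 d3 by simp

lemma Rmap:
  assumes sym: "transpose M = M" and X: "bf M X X = 0" and X': "bf M X' X' = 0"
    and A: "A = s *\<^sub>R X + t *\<^sub>R X'"
  shows "rf M A X = (-2 * t^2 * bf M X X') *\<^sub>R X'" "bf M A A = 2 * s * t * bf M X X'"
proof -
  have s1: "bf M X' X = bf M X X'" using bf_sym[OF sym] by simp
  show "rf M A X = (-2 * t^2 * bf M X X') *\<^sub>R X'"
    unfolding rf_def A by (simp add: bf_lin s1 X X' algebra_simps power2_eq_square)
  show "bf M A A = 2 * s * t * bf M X X'"
    unfolding A by (simp add: bf_lin s1 X X' algebra_simps)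
qed

definition ptok :: "real^3^3 \<Rightarrow> real^3 \<Rightarrow> real^3 \<Rightarrow> real^3 \<Rightarrow> real^3 \<Rightarrow> real^3 \<Rightarrow> bool" where
  "ptok M Z P P' Q Q' \<longleftrightarrow> sim (rf M Z P) P' \<and> sim (rf M Z Q) Q' \<and> bf M Z Z \<noteq> 0"

lemma ptok_swap: "ptok M Z P P' Q Q' \<Longrightarrow> ptok M Z Q Q' P P'"
  unfolding ptok_def by blast

lemma ptok_flip:
  assumes "transpose M = M" "ptok M Z P P' Q Q'"
  shows "ptok M Z P' P Q' Q"
  using assms sim_inv unfolding ptok_def by blast

lemma chord_half:
  assumes conic: "nondeg_conic M" and X: "on_conic M X" and X': "on_conic M X'"
    and Y: "on_conic M Y" and Y': "on_conic M Y'"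
    and d: "cross3 X X' \<noteq> 0" "cross3 Y Y' \<noteq> 0" "cross3 X Y \<noteq> 0" "cross3 X Y' \<noteq> 0"
      "cross3 X' Y \<noteq> 0" "cross3 X' Y' \<noteq> 0"
    and A: "A = cross3 (cross3 X X') (cross3 Y Y')"
  shows "sim (rf M A X) X' \<and> bf M A A \<noteq> 0"
proof -
  have sym: "transpose M = M" using conic by (auto simp: nondeg_conic_def)
  define v where "v = cross3 Y Y'"
  have "A = - cross3 v (cross3 X X')" unfolding A v_def by (rule cross_skew)
  also have "\<dots> = (- (v \<bullet> X')) *\<^sub>R X + (v \<bullet> X) *\<^sub>R X'" by (simp add: cross_cross algebra_simps)
  finally have Ae: "A = (- (v \<bullet> X')) *\<^sub>R X + (v \<bullet> X) *\<^sub>R X'" .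
  have t0: "v \<bullet> X \<noteq> 0"
  proof
    assume "v \<bullet> X = 0"
    hence "Y \<bullet> cross3 Y' X = 0" unfolding v_def by (metis inner_commute triple_cyc(2))
    hence "cross3 X Y = 0 \<or> cross3 X Y' = 0" using L1[OF conic Y Y' X d(2)] by simp
    thus False using d by simp
  qed
  have s0: "v \<bullet> X' \<noteq> 0"
  proof
    assume "v \<bullet> X' = 0"
    hence "Y \<bullet> cross3 Y' X' = 0" unfolding v_def by (metis inner_commute triple_cyc(2))
    hence "cross3 X' Y = 0 \<or> cross3 X' Y' = 0" using L1[OF conic Y Y' X' d(2)] by simp
    thus False using d by simp
  qed
  have xx: "bf M X X = 0" "bf M X' X' = 0" using X X' by (auto simp: on_conic_def bf_def)
  have b: "bf M X X' \<noteq> 0" using L0[OF conic X X' d(1)] .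
  have r: "rf M A X = (-2 * (v \<bullet> X)^2 * bf M X X') *\<^sub>R X'" using Rmap(1)[OF sym xx Ae] .
  have q: "bf M A A = 2 * (- (v \<bullet> X')) * (v \<bullet> X) * bf M X X'" using Rmap(2)[OF sym xx Ae] .
  have "sim (rf M A X) X'" unfolding r sim_def using t0 b by (intro exI[of _ "-2 * (v \<bullet> X)^2 * bf M X X'"]) simp
  moreover have "bf M A A \<noteq> 0" unfolding q using t0 s0 b by simp
  ultimately show ?thesis by blast
qed

lemma bf_neg: "bf M (- x) y = - bf M x y" "bf M x (- y) = - bf M x y"
proof -
  show "bf M (- x) y = - bf M x y" using bf_scale1[of M "-1" x y] by simp
  show "bf M x (- y) = - bf M x y" using bf_scale2[of M x "-1" y] by simp
qed

lemma cross_sym_ne: "cross3 x y \<noteq> 0 \<Longrightarrow> cross3 y x \<noteq> 0"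
  by (metis cross_skew neg_equal_0_iff_equal)

lemma chord_ptok:
  assumes conic: "nondeg_conic M" and X: "on_conic M X" and X': "on_conic M X'"
    and Y: "on_conic M Y" and Y': "on_conic M Y'"
    and d: "cross3 X X' \<noteq> 0" "cross3 Y Y' \<noteq> 0" "cross3 X Y \<noteq> 0" "cross3 X Y' \<noteq> 0"
      "cross3 X' Y \<noteq> 0" "cross3 X' Y' \<noteq> 0"
  shows "ptok M (cross3 (cross3 X X') (cross3 Y Y')) X X' Y Y'"
proof -
  define A where "A = cross3 (cross3 X X') (cross3 Y Y')"
  have h1: "sim (rf M A X) X' \<and> bf M A A \<noteq> 0" using chord_half[OF conic X X' Y Y' d A_def] .
  have A2: "- A = cross3 (cross3 Y Y') (cross3 X X')" unfolding A_def by (metis cross_skew minus_minus)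
  have h2: "sim (rf M (- A) Y) Y'"
    using chord_half[OF conic Y Y' X X' d(2) d(1) cross_sym_ne[OF d(3)] cross_sym_ne[OF d(5)]
        cross_sym_ne[OF d(4)] cross_sym_ne[OF d(6)] A2] by blast
  have "rf M (- A) Y = rf M A Y" unfolding rf_def by (simp add: bf_neg)
  thus ?thesis using h1 h2 unfolding ptok_def A_def by simp
qed

lemma virtual:
  assumes sym: "transpose M = M" and P: "bf M P P = 0" and P': "bf M P' P' = 0"
    and b: "bf M P P' \<noteq> 0" and lP: "l \<bullet> P \<noteq> 0"
  shows "sim (rf M (cross3 l (cross3 P P')) P) P'" "l \<bullet> cross3 l (cross3 P P') = 0"
    "cross3 l (cross3 P P') \<bullet> cross3 P P' = 0"
proof -
  have e: "cross3 l (cross3 P P') = (l \<bullet> P') *\<^sub>R P + (- (l \<bullet> P)) *\<^sub>R P'"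
    by (simp add: cross_cross)
  have "rf M (cross3 l (cross3 P P')) P = (-2 * (- (l \<bullet> P))^2 * bf M P P') *\<^sub>R P'"
    using Rmap(1)[OF sym P P' e] .
  thus "sim (rf M (cross3 l (cross3 P P')) P) P'" unfolding sim_def using b lP
    by (intro exI[of _ "-2 * (- (l \<bullet> P))^2 * bf M P P'"]) simp
  show "l \<bullet> cross3 l (cross3 P P') = 0" by (simp add: dot_cross_self)
  show "cross3 l (cross3 P P') \<bullet> cross3 P P' = 0" by (simp add: dot_cross_self)
qed

lemma conclude:
  assumes h: "sim (rf M v Q) Q'" and d: "cross3 Q Q' \<noteq> 0"
  shows "v \<noteq> 0 \<and> v \<bullet> cross3 Q Q' = 0"
proof -
  obtain c where c: "c \<noteq> 0" "rf M v Q = c *\<^sub>R Q'" using h unfolding sim_def by blast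
  have Q'0: "Q' \<noteq> 0" using d by auto
  have v0: "v \<noteq> 0"
  proof
    assume "v = 0" hence "rf M v Q = 0" by (simp add: rf_def)
    thus False using c Q'0 by simp
  qed
  have e: "bf M v v *\<^sub>R Q - (2 * bf M v Q) *\<^sub>R v = c *\<^sub>R Q'" using c unfolding rf_def by simp
  show ?thesis
  proof (cases "bf M v Q = 0")
    case True
    hence "bf M v v *\<^sub>R Q = c *\<^sub>R Q'" using e by simp
    hence "cross3 (bf M v v *\<^sub>R Q) Q' = cross3 (c *\<^sub>R Q') Q'" by simp
    hence "bf M v v *\<^sub>R cross3 Q Q' = 0" by (simp add: cross_mult_left)
    hence "bf M v v = 0" using d by simp
    hence "c *\<^sub>R Q' = 0" using \<open>bf M v v *\<^sub>R Q = c *\<^sub>R Q'\<close> by simp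
    thus ?thesis using c Q'0 by simp
  next
    case False
    have h2: "(2 * bf M v Q) *\<^sub>R v = bf M v v *\<^sub>R Q - c *\<^sub>R Q'"
      using e by (simp add: algebra_simps)
    have vv: "v = (1 / (2 * bf M v Q)) *\<^sub>R (bf M v v *\<^sub>R Q - c *\<^sub>R Q')"
      by (rule scale_solve[OF _ h2]) (simp add: False)
    have "v \<bullet> cross3 Q Q' = 0" by (subst vv) (simp add: inner_diff_left dot_cross_self)
    thus ?thesis using v0 by simp
  qed
qed

lemma propag:
  assumes "l \<bullet> Z = 0" "l \<bullet> P = 0" "sim (rf M Z P) P'"
  shows "l \<bullet> P' = 0"
proof -
  obtain c where c: "c \<noteq> 0" "rf M Z P = c *\<^sub>R P'" using assms(3) unfolding sim_def by blast
  have "l \<bullet> rf M Z P = 0" using assms(1,2) by (simp add: rf_def inner_diff_right)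
  thus ?thesis using c by simp
qed



declare sim_trans[trans]

lemma coreA:
  assumes sym: "transpose M = M" and l: "l \<noteq> 0"
    and h1: "sim (prodR M K1 X1) Xj" and h2: "sim (prodR M K1 Y1) Yj"
    and h3: "sim (rf M B U) X1" and h4: "sim (rf M C Y1) U"
    and h5: "\<forall>z. prodR M K1 (rf M B (rf M C z)) = rf M x (rf M y (prodR M K1 z))"
    and h6: "sim (rf M a Xj) Xj1" and h7: "sim (prodR M K2 Xj1) XN"
    and h8: "sim (rf M E1 (rf M E2 XN)) YN"
    and h9: "\<forall>z. rf M E1 (rf M E2 (prodR M K2 z)) = prodR M K2 (rf M x (rf M y z))"
    and h10: "sim (prodR M K2 Yj1) YN" and h11: "\<forall>p\<in>set K2. bf M p p \<noteq> 0"
    and lx: "l \<bullet> x = 0" and ly: "l \<bullet> y = 0" and la: "l \<bullet> a = 0"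
    and qx: "bf M x x \<noteq> 0" and qy: "bf M y y \<noteq> 0"
  shows "sim (rf M a Yj) Yj1"
proof -
  have "sim Xj (prodR M K1 X1)" using sim_sym[OF h1] .
  also have "sim \<dots> (prodR M K1 (rf M B U))" using sim_prodR[OF sim_sym[OF h3]] .
  also have "sim \<dots> (prodR M K1 (rf M B (rf M C Y1)))" using sim_prodR[OF sim_rf[OF sim_sym[OF h4]]] .
  also have "\<dots> = rf M x (rf M y (prodR M K1 Y1))" using h5 by simp
  also have "sim \<dots> (rf M x (rf M y Yj))" using sim_rf[OF sim_rf[OF h2]] .
  finally have hX: "sim Xj (rf M x (rf M y Yj))" .
  have "sim YN (rf M E1 (rf M E2 XN))" using sim_sym[OF h8] .
  also have "sim \<dots> (rf M E1 (rf M E2 (prodR M K2 Xj1)))" using sim_rf[OF sim_rf[OF sim_sym[OF h7]]] .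
  also have "sim \<dots> (rf M E1 (rf M E2 (prodR M K2 (rf M a Xj))))"
    using sim_rf[OF sim_rf[OF sim_prodR[OF sim_sym[OF h6]]]] .
  also have "sim \<dots> (rf M E1 (rf M E2 (prodR M K2 (rf M a (rf M x (rf M y Yj))))))"
    using sim_rf[OF sim_rf[OF sim_prodR[OF sim_rf[OF hX]]]] .
  also have "\<dots> = prodR M K2 (rf M x (rf M y (rf M a (rf M x (rf M y Yj)))))" using h9 by simp
  also have "\<dots> = prodR M K2 (rf M x (rf M x (rf M a (rf M y (rf M y Yj)))))"
    using rev3[OF sym l ly la lx] by simp
  also have "\<dots> = ((bf M x x)^2 * (bf M y y)^2) *\<^sub>R prodR M K2 (rf M a Yj)"
    by (simp add: rf_sq[OF sym] rf_scale prodR_scale)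
  finally have "sim YN (((bf M x x)^2 * (bf M y y)^2) *\<^sub>R prodR M K2 (rf M a Yj))" .
  hence "sim YN (prodR M K2 (rf M a Yj))" by (rule sim_scale2[rotated]) (simp add: qx qy)
  hence "sim (prodR M K2 Yj1) (prodR M K2 (rf M a Yj))" by (rule sim_trans[OF h10])
  hence "sim Yj1 (rf M a Yj)" by (rule prodR_sim_cancel[OF sym h11])
  thus ?thesis by (rule sim_sym)
qed

lemma ptok_l_chain:
  assumes "\<forall>i. 1 \<le> i \<and> i < N \<and> P i \<longrightarrow> ptok M (A i) (X i) (X (Suc i)) (Y i) (Y (Suc i)) \<and> l \<bullet> A i = 0"
    and "\<forall>i. a \<le> i \<and> i < m \<longrightarrow> P i" and "1 \<le> a" "a \<le> m" "m \<le> N"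
  shows "sim (prodR M (map A (rev [a..<m])) (X a)) (X m)"
    "sim (prodR M (map A (rev [a..<m])) (Y a)) (Y m)"
    "\<forall>p\<in>set (map A (rev [a..<m])). l \<bullet> p = 0"
    "\<forall>p\<in>set (map A (rev [a..<m])). bf M p p \<noteq> 0"
proof -
  have h: "\<forall>i. a \<le> i \<and> i < m \<longrightarrow> ptok M (A i) (X i) (X (Suc i)) (Y i) (Y (Suc i)) \<and> l \<bullet> A i = 0"
    using assms by auto
  show "sim (prodR M (map A (rev [a..<m])) (X a)) (X m)"
    by (rule chain) (use h assms in \<open>auto simp: ptok_def\<close>)
  show "sim (prodR M (map A (rev [a..<m])) (Y a)) (Y m)"
    by (rule chain) (use h assms in \<open>auto simp: ptok_def\<close>)
  show "\<forall>p\<in>set (map A (rev [a..<m])). l \<bullet> p = 0" using h by auto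
  show "\<forall>p\<in>set (map A (rev [a..<m])). bf M p p \<noteq> 0" using h by (auto simp: ptok_def)
qed



lemma conic_bf: "on_conic M P \<Longrightarrow> bf M P P = 0" by (simp add: on_conic_def bf_def)

lemma final_L2:
  assumes "v \<noteq> 0" "v \<bullet> l = 0" "v \<bullet> c1 = 0" "v \<bullet> c2 = 0"
  shows "l \<bullet> cross3 c1 c2 = 0"
  using L2[OF assms] .

lemma caseC:
  assumes conic: "nondeg_conic M" and N2: "N \<ge> 2" and l: "l \<noteq> 0"
    and hA: "\<forall>i. 1 \<le> i \<and> i < N \<and> True \<longrightarrow> ptok M (A i) (X i) (X (Suc i)) (Y i) (Y (Suc i)) \<and> l \<bullet> A i = 0"
    and WB: "WB = (if even N then Y N else X N)" and WC: "WC = (if even N then X N else Y N)"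
    and hB: "ptok M B U (X 1) WB V" and lB: "l \<bullet> B = 0"
    and cU: "on_conic M U" and cX1: "on_conic M (X 1)" and cX2: "on_conic M (X 2)" and cY1: "on_conic M (Y 1)"
    and d1: "cross3 U (X 1) \<noteq> 0" and d2: "cross3 (X 2) U \<noteq> 0" and d3: "cross3 (X 2) (X 1) \<noteq> 0"
    and d4: "cross3 U (Y 1) \<noteq> 0" and d5: "cross3 V WC \<noteq> 0"
    and C: "C = cross3 (cross3 U (Y 1)) (cross3 WC V)"
  shows "l \<bullet> C = 0"
proof -
  have sym: "transpose M = M" using conic by (auto simp: nondeg_conic_def)
  have qB: "bf M B B \<noteq> 0" and hB1: "sim (rf M B U) (X 1)" and hB2: "sim (rf M B WB) V"
    using hB by (auto simp: ptok_def)
  have lU: "l \<bullet> U \<noteq> 0"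
  proof
    assume u: "l \<bullet> U = 0"
    have x1: "l \<bullet> X 1 = 0" using propag[OF lB u hB1] .
    have "ptok M (A 1) (X 1) (X (Suc 1)) (Y 1) (Y (Suc 1)) \<and> l \<bullet> A 1 = 0" using hA N2 by auto
    hence x2: "l \<bullet> X 2 = 0" using propag[OF _ x1] by (auto simp: ptok_def numeral_2_eq_2)
    show False using L3[OF conic cU cX1 cX2 d1 d2 d3 l u x1 x2] .
  qed
  define c where "c = cross3 l (cross3 U (Y 1))"
  have bUY: "bf M U (Y 1) \<noteq> 0" using L0[OF conic cU cY1 d4] .
  have vc1: "sim (rf M c U) (Y 1)" and vc2: "l \<bullet> c = 0" and vc3: "c \<bullet> cross3 U (Y 1) = 0"
    using virtual[OF sym conic_bf[OF cU] conic_bf[OF cY1] bUY lU] unfolding c_def by auto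
  define K where "K = map A (rev [1..<N])"
  have KX: "sim (prodR M K (X 1)) (X N)" and KY: "sim (prodR M K (Y 1)) (Y N)"
    and Kl: "\<forall>p\<in>set K. l \<bullet> p = 0"
    using ptok_l_chain[OF hA, of 1 N] N2 unfolding K_def by auto
  have lenK: "length K = N - 1" unfolding K_def by simp
  have cm: "prodR M K (rf M c (rf M B z)) = (if even (length K) then rf M c (rf M B (prodR M K z))
      else rf M B (rf M c (prodR M K z)))" for z
    using comm[OF sym l Kl vc2 lB] .
  have UB: "sim U (rf M B (X 1))" using sim_sym[OF sim_inv[OF sym qB hB1]] .
  have "sim (Y N) (prodR M K (Y 1))" using sim_sym[OF KY] .
  also have "sim \<dots> (prodR M K (rf M c U))" using sim_prodR[OF sim_sym[OF vc1]] .
  also have "sim \<dots> (prodR M K (rf M c (rf M B (X 1))))" using sim_prodR[OF sim_rf[OF UB]] .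
  finally have YN: "sim (Y N) (prodR M K (rf M c (rf M B (X 1))))" .
  show ?thesis
  proof (cases "even N")
    case True
    hence oK: "odd (length K)" using lenK N2 by simp
    have "sim (Y N) (rf M B (rf M c (prodR M K (X 1))))" using YN cm[of "X 1"] oK by simp
    also have "sim \<dots> (rf M B (rf M c (X N)))" using sim_rf[OF sim_rf[OF KX]] .
    finally have "sim (rf M B (Y N)) (rf M B (rf M B (rf M c (X N))))" by (rule sim_rf)
    hence "sim (rf M B (Y N)) ((bf M B B)^2 *\<^sub>R rf M c (X N))" by (simp add: rf_sq[OF sym])
    moreover have "(bf M B B)^2 \<noteq> 0" using qB by simp
    ultimately have "sim (rf M B (Y N)) (rf M c (X N))" using sim_scale2 by blast
    hence "sim V (rf M c (X N))" using hB2 True WB by (metis sim_sym sim_trans)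
    hence "sim (rf M c (X N)) V" by (rule sim_sym)
    moreover have "cross3 (X N) V \<noteq> 0" using d5 True WC cross_sym_ne by simp
    ultimately have "c \<noteq> 0 \<and> c \<bullet> cross3 (X N) V = 0" by (rule conclude)
    hence "l \<bullet> cross3 (cross3 U (Y 1)) (cross3 (X N) V) = 0"
      using final_L2 vc2 vc3 by (metis inner_commute)
    thus ?thesis using C WC True by simp
  next
    case False
    hence eK: "even (length K)" using lenK N2 by simp
    have "sim (Y N) (rf M c (rf M B (prodR M K (X 1))))" using YN cm[of "X 1"] eK by simp
    also have "sim \<dots> (rf M c (rf M B (X N)))" using sim_rf[OF sim_rf[OF KX]] .
    also have "sim \<dots> (rf M c V)" using sim_rf[OF hB2] False WB by simp
    finally have "sim (rf M c V) (Y N)" by (rule sim_sym)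
    moreover have "cross3 V (Y N) \<noteq> 0" using d5 False WC by simp
    ultimately have "c \<noteq> 0 \<and> c \<bullet> cross3 V (Y N) = 0" by (rule conclude)
    hence "c \<noteq> 0 \<and> c \<bullet> cross3 (Y N) V = 0" using triple_cyc(3) by (metis neg_equal_0_iff_equal)
    hence "l \<bullet> cross3 (cross3 U (Y 1)) (cross3 (Y N) V) = 0"
      using final_L2 vc2 vc3 by (metis inner_commute)
    thus ?thesis using C WC False by simp
  qed
qed



lemma caseA:
  assumes conic: "nondeg_conic M" and N2: "N \<ge> 2" and l: "l \<noteq> 0" and j1: "1 \<le> j" and jN: "j < N"
    and hA: "\<forall>i. 1 \<le> i \<and> i < N \<and> i \<noteq> j \<longrightarrow> ptok M (A i) (X i) (X (Suc i)) (Y i) (Y (Suc i)) \<and> l \<bullet> A i = 0"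
    and WB: "WB = (if even N then Y N else X N)" and WC: "WC = (if even N then X N else Y N)"
    and hB: "ptok M B U (X 1) WB V" and lB: "l \<bullet> B = 0"
    and hC: "ptok M C U (Y 1) WC V" and lC: "l \<bullet> C = 0"
    and lX: "l \<bullet> X j \<noteq> 0" and cXj: "on_conic M (X j)" and cXj1: "on_conic M (X (Suc j))"
    and dX: "cross3 (X j) (X (Suc j)) \<noteq> 0" and dY: "cross3 (Y j) (Y (Suc j)) \<noteq> 0"
  shows "l \<bullet> cross3 (cross3 (X j) (X (Suc j))) (cross3 (Y j) (Y (Suc j))) = 0"
proof -
  have sym: "transpose M = M" using conic by (auto simp: nondeg_conic_def)
  have qB: "bf M B B \<noteq> 0" and hB1: "sim (rf M B U) (X 1)" and hB2: "sim (rf M B WB) V"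
    using hB by (auto simp: ptok_def)
  have qC: "bf M C C \<noteq> 0" and hC1: "sim (rf M C U) (Y 1)" and hC2: "sim (rf M C WC) V"
    using hC by (auto simp: ptok_def)
  define a where "a = cross3 l (cross3 (X j) (X (Suc j)))"
  have bX: "bf M (X j) (X (Suc j)) \<noteq> 0" using L0[OF conic cXj cXj1 dX] .
  have va1: "sim (rf M a (X j)) (X (Suc j))" and va2: "l \<bullet> a = 0"
    and va3: "a \<bullet> cross3 (X j) (X (Suc j)) = 0"
    using virtual[OF sym conic_bf[OF cXj] conic_bf[OF cXj1] bX lX] unfolding a_def by auto
  define K1 where "K1 = map A (rev [1..<j])"
  define K2 where "K2 = map A (rev [Suc j..<N])"
  have K1X: "sim (prodR M K1 (X 1)) (X j)" and K1Y: "sim (prodR M K1 (Y 1)) (Y j)"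
    and K1l: "\<forall>p\<in>set K1. l \<bullet> p = 0"
    using ptok_l_chain[OF hA, of 1 j] j1 jN unfolding K1_def by auto
  have K2X: "sim (prodR M K2 (X (Suc j))) (X N)" and K2Y: "sim (prodR M K2 (Y (Suc j))) (Y N)"
    and K2l: "\<forall>p\<in>set K2. l \<bullet> p = 0" and K2q: "\<forall>p\<in>set K2. bf M p p \<noteq> 0"
    using ptok_l_chain[OF hA, of "Suc j" N] j1 jN unfolding K2_def by auto
  have len1: "length K1 = j - 1" and len2: "length K2 = N - Suc j" unfolding K1_def K2_def by simp_all
  have h4: "sim (rf M C (Y 1)) U" using sim_inv[OF sym qC hC1] .
  have cm1: "prodR M K1 (rf M B (rf M C z)) = (if even (length K1) then rf M B (rf M C (prodR M K1 z))
      else rf M C (rf M B (prodR M K1 z)))" for z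
    using comm[OF sym l K1l lB lC] .
  have cm2: "prodR M K2 (rf M p (rf M q z)) = (if even (length K2) then rf M p (rf M q (prodR M K2 z))
      else rf M q (rf M p (prodR M K2 z)))" if "l \<bullet> p = 0" "l \<bullet> q = 0" for z p q
    using comm[OF sym l K2l that] .
  have far: "(even N \<and> sim (rf M B (rf M C (X N))) (Y N)) \<or> (odd N \<and> sim (rf M C (rf M B (X N))) (Y N))"
  proof (cases "even N")
    case True
    have "sim (rf M B (rf M C (X N))) (rf M B V)" using sim_rf[OF hC2] True WC by simp
    also have "sim \<dots> (Y N)" using sim_inv[OF sym qB hB2] True WB by simp
    finally show ?thesis using True by blast
  next
    case False
    have "sim (rf M C (rf M B (X N))) (rf M C V)" using sim_rf[OF hB2] False WB by simp
    also have "sim \<dots> (Y N)" using sim_inv[OF sym qC hC2] False WC by simp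
    finally show ?thesis using False by blast
  qed
  obtain x y E1 E2 where xy: "(x = B \<and> y = C) \<or> (x = C \<and> y = B)"
    and h5: "\<forall>z. prodR M K1 (rf M B (rf M C z)) = rf M x (rf M y (prodR M K1 z))"
    and h8: "sim (rf M E1 (rf M E2 (X N))) (Y N)"
    and h9: "\<forall>z. rf M E1 (rf M E2 (prodR M K2 z)) = prodR M K2 (rf M x (rf M y z))"
  proof (cases "even (length K1)")
    case e1: True
    show ?thesis
    proof (cases "even N")
      case True
      have "even (length K2)" using e1 True len1 len2 j1 jN by presburger
      thus ?thesis using that[of B C B C] cm1 e1 cm2[OF lB lC] far True by simp
    next
      case False
      have "odd (length K2)" using e1 False len1 len2 j1 jN by presburger
      thus ?thesis using that[of B C C B] cm1 e1 cm2[OF lB lC] far False by simp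
    qed
  next
    case e1: False
    show ?thesis
    proof (cases "even N")
      case True
      have "odd (length K2)" using e1 True len1 len2 j1 jN by presburger
      thus ?thesis using that[of C B B C] cm1 e1 cm2[OF lC lB] far True by simp
    next
      case False
      have "even (length K2)" using e1 False len1 len2 j1 jN by presburger
      thus ?thesis using that[of C B C B] cm1 e1 cm2[OF lC lB] far False by simp
    qed
  qed
  have lx: "l \<bullet> x = 0" and ly: "l \<bullet> y = 0" and qx: "bf M x x \<noteq> 0" and qy: "bf M y y \<noteq> 0"
    using xy lB lC qB qC by auto
  have "sim (rf M a (Y j)) (Y (Suc j))"
    using coreA[OF sym l K1X K1Y hB1 h4 h5 va1 K2X h8 h9 K2Y K2q lx ly va2 qx qy] .
  hence "a \<noteq> 0 \<and> a \<bullet> cross3 (Y j) (Y (Suc j)) = 0" using conclude dY by blast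
  thus ?thesis using final_L2 va2 va3 by (metis inner_commute)
qed



lemma vs_pos:
  assumes vs_def: "vs = [U] @ map X [1..<N+1] @ [V] @ map Y (rev [1..<N+1])"
  shows "length vs = 2*N+2" "vs ! 0 = U" "\<And>i. 1 \<le> i \<Longrightarrow> i \<le> N \<Longrightarrow> vs ! i = X i"
    "vs ! (N+1) = V" "\<And>i. 1 \<le> i \<Longrightarrow> i \<le> N \<Longrightarrow> vs ! (2*N+2-i) = Y i"
proof -
  show "length vs = 2*N+2" "vs ! 0 = U" using vs_def by simp_all
  show "vs ! i = X i" if "1 \<le> i" "i \<le> N" for i
  proof -
    have "i - Suc 0 < N - Suc 0 \<or> i = N" using that by linarith
    thus ?thesis using that by (auto simp add: vs_def nth_append nth_Cons')
  qed
  show "vs ! (N+1) = V" by (simp add: vs_def nth_append nth_Cons')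
  show "vs ! (2*N+2-i) = Y i" if "1 \<le> i" "i \<le> N" for i
  proof -
    have e: "vs = (U # map X [1..<N+1]) @ (V # map Y (rev [1..<N+1]))" by (simp add: vs_def)
    have "vs ! (2*N+2-i) = (V # map Y (rev [1..<N+1])) ! (2*N+2-i - (N+1))"
    proof -
      have nl: "\<not> (2*N+2-i < length (U # map X [1..<N+1]))" using that by simp
      have ln: "length (U # map X [1..<N+1]) = N+1" by simp
      show ?thesis unfolding e nth_append using nl ln by presburger
    qed
    also have "2*N+2-i - (N+1) = Suc (N - i)" using that by simp
    finally have "vs ! (2*N+2-i) = map Y (rev [1..<N+1]) ! (N - i)" by simp
    also have "\<dots> = Y i" using that by (simp del: upt_Suc add: rev_nth nth_map)
    finally show ?thesis .
  qed
qed



theorem theorem2: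
  fixes M :: "real^3^3" and N :: nat and U V :: "real^3" and X Y :: "nat \<Rightarrow> real^3"
    and A :: "nat \<Rightarrow> real^3" and B C :: "real^3" and vs :: "(real^3) list"
    and pts :: "nat \<Rightarrow> real^3"
  assumes conic: "nondeg_conic M"
    and N2: "N \<ge> 2"
    and vs_def: "vs = [U] @ map X [1..<N+1] @ [V] @ map Y (rev [1..<N+1])"
    and nonzero: "\<forall>P\<in>set vs. P \<noteq> 0"
    and inscribed: "\<forall>P\<in>set vs. on_conic M P"
    and distinct: "\<forall>i<length vs. \<forall>j<length vs. i \<noteq> j \<longrightarrow> \<not> proj_same (vs ! i) (vs ! j)"
    and A_def: "\<forall>j. A j = pmeet (pjoin (X j) (X (j+1))) (pjoin (Y j) (Y (j+1)))"
    and B_def: "B = (if even N then pmeet (pjoin U (X 1)) (pjoin (Y N) V)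
                            else pmeet (pjoin U (X 1)) (pjoin (X N) V))"
    and C_def: "C = (if even N then pmeet (pjoin U (Y 1)) (pjoin (X N) V)
                            else pmeet (pjoin U (Y 1)) (pjoin (Y N) V))"
    and pts_def: "\<forall>i. pts i = (if i = N then B else if i = N + 1 then C else A i)"
    and all_but_one: "\<exists>k\<in>{1..N+1}. proj_collinear (pts ` ({1..N+1} - {k}))"
  shows "proj_collinear (pts ` {1..N+1})"
proof -
  have sym: "transpose M = M" using conic by (simp add: nondeg_conic_def)
  note P = vs_pos[OF vs_def]
  have len: "length vs = 2*N+2" by (rule P(1))
  have cv: "on_conic M (vs ! i)" if "i < 2*N+2" for i using inscribed len that by simp
  have dv: "cross3 (vs ! i) (vs ! j) \<noteq> 0" if "i < 2*N+2" "j < 2*N+2" "i \<noteq> j" for i j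
    using distinct len that unfolding proj_same_def by auto
  have cU: "on_conic M U" using cv[of 0] P(2) by simp
  have cX: "on_conic M (X i)" if "1 \<le> i" "i \<le> N" for i using cv[of i] P(3)[of i] that by simp
  have cV: "on_conic M V" using cv[of "N+1"] P(4) by simp
  have cY: "on_conic M (Y i)" if "1 \<le> i" "i \<le> N" for i using cv[of "2*N+2-i"] P(5)[of i] that by simp
  have dUX: "cross3 U (X i) \<noteq> 0" if "1 \<le> i" "i \<le> N" for i using dv[of 0 i] P(2) P(3)[of i] that by simp
  have dUY: "cross3 U (Y i) \<noteq> 0" if "1 \<le> i" "i \<le> N" for i
    using dv[of 0 "2*N+2-i"] P(2) P(5)[of i] that by simp
  have dUV: "cross3 U V \<noteq> 0" using dv[of 0 "N+1"] P(2) P(4) by simp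
  have dXX: "cross3 (X i) (X i') \<noteq> 0" if "1 \<le> i" "i \<le> N" "1 \<le> i'" "i' \<le> N" "i \<noteq> i'" for i i'
    using dv[of i i'] P(3)[of i] P(3)[of i'] that by simp
  have dXY: "cross3 (X i) (Y i') \<noteq> 0" if "1 \<le> i" "i \<le> N" "1 \<le> i'" "i' \<le> N" for i i'
    using dv[of i "2*N+2-i'"] P(3)[of i] P(5)[of i'] that by simp
  have dXV: "cross3 (X i) V \<noteq> 0" if "1 \<le> i" "i \<le> N" for i
    using dv[of i "N+1"] P(3)[of i] P(4) that by simp
  have dYY: "cross3 (Y i) (Y i') \<noteq> 0" if "1 \<le> i" "i \<le> N" "1 \<le> i'" "i' \<le> N" "i \<noteq> i'" for i i'
    using dv[of "2*N+2-i" "2*N+2-i'"] P(5)[of i] P(5)[of i'] that by simp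
  have dYV: "cross3 (Y i) V \<noteq> 0" if "1 \<le> i" "i \<le> N" for i
    using dv[of "2*N+2-i" "N+1"] P(5)[of i] P(4) that by simp
  have dYX: "cross3 (Y i) (X i') \<noteq> 0" if "1 \<le> i" "i \<le> N" "1 \<le> i'" "i' \<le> N" for i i'
    using cross_sym_ne[OF dXY[of i' i]] that by simp
  have ptA: "ptok M (A i) (X i) (X (Suc i)) (Y i) (Y (Suc i))" if "1 \<le> i" "i < N" for i
  proof -
    have "A i = cross3 (cross3 (X i) (X (Suc i))) (cross3 (Y i) (Y (Suc i)))"
      using A_def by (simp add: pmeet_def pjoin_def)
    moreover have "ptok M (cross3 (cross3 (X i) (X (Suc i))) (cross3 (Y i) (Y (Suc i)))) (X i) (X (Suc i)) (Y i) (Y (Suc i))"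
      by (rule chord_ptok[OF conic]) (use that in \<open>simp_all add: cX cY dXX dYY dXY\<close>)
    ultimately show ?thesis by simp
  qed
  define WB where "WB = (if even N then Y N else X N)"
  define WC where "WC = (if even N then X N else Y N)"
  have cWB: "on_conic M WB" and cWC: "on_conic M WC" using cX cY N2 unfolding WB_def WC_def by auto
  have ptB: "ptok M B U (X 1) WB V"
  proof -
    have "B = cross3 (cross3 U (X 1)) (cross3 WB V)" using B_def WB_def by (simp add: pmeet_def pjoin_def)
    moreover have "ptok M (cross3 (cross3 U (X 1)) (cross3 WB V)) U (X 1) WB V"
    proof (rule chord_ptok[OF conic cU cX[of 1] cWB cV])
      show "cross3 U (X 1) \<noteq> 0" using dUX N2 by simp
      show "cross3 WB V \<noteq> 0" using dYV dXV N2 unfolding WB_def by auto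
      show "cross3 U WB \<noteq> 0" using dUY dUX N2 unfolding WB_def by auto
      show "cross3 U V \<noteq> 0" using dUV .
      show "cross3 (X 1) WB \<noteq> 0" using dXY dXX N2 unfolding WB_def by auto
      show "cross3 (X 1) V \<noteq> 0" using dXV N2 by simp
    qed (use N2 in simp_all)
    ultimately show ?thesis by simp
  qed
  have ptC: "ptok M C U (Y 1) WC V"
  proof -
    have "C = cross3 (cross3 U (Y 1)) (cross3 WC V)" using C_def WC_def by (simp add: pmeet_def pjoin_def)
    moreover have "ptok M (cross3 (cross3 U (Y 1)) (cross3 WC V)) U (Y 1) WC V"
    proof (rule chord_ptok[OF conic cU cY[of 1] cWC cV])
      show "cross3 U (Y 1) \<noteq> 0" using dUY N2 by simp
      show "cross3 WC V \<noteq> 0" using dYV dXV N2 unfolding WC_def by auto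
      show "cross3 U WC \<noteq> 0" using dUY dUX N2 unfolding WC_def by auto
      show "cross3 U V \<noteq> 0" using dUV .
      show "cross3 (Y 1) WC \<noteq> 0" using dYX dYY N2 unfolding WC_def by auto
      show "cross3 (Y 1) V \<noteq> 0" using dYV N2 by simp
    qed (use N2 in simp_all)
    ultimately show ?thesis by simp
  qed
  from all_but_one obtain k where k: "k \<in> {1..N+1}" and col: "proj_collinear (pts ` ({1..N+1} - {k}))"
    by blast
  then obtain l where l0: "l \<noteq> 0" and hl: "\<forall>P\<in>pts ` ({1..N+1} - {k}). l \<bullet> P = 0"
    unfolding proj_collinear_def by blast
  have hl': "l \<bullet> pts i = 0" if "i \<in> {1..N+1}" "i \<noteq> k" for i using hl that by blast
  have lA: "l \<bullet> A i = 0" if "1 \<le> i" "i < N" "i \<noteq> k" for i using hl'[of i] pts_def that by simp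
  have lBk: "l \<bullet> B = 0" if "k \<noteq> N" using hl'[of N] pts_def that N2 by simp
  have lCk: "l \<bullet> C = 0" if "k \<noteq> N+1" using hl'[of "N+1"] pts_def that N2 by simp
  have key: "l \<bullet> pts k = 0"
  proof -
    consider "k = N+1" | "k = N" | "1 \<le> k \<and> k < N" using k by force
    then show ?thesis
    proof cases
      case 1
      have hA1: "\<forall>i. 1 \<le> i \<and> i < N \<and> True \<longrightarrow> ptok M (A i) (X i) (X (Suc i)) (Y i) (Y (Suc i)) \<and> l \<bullet> A i = 0"
        using ptA lA 1 by auto
      have C': "C = cross3 (cross3 U (Y 1)) (cross3 WC V)" using C_def WC_def by (simp add: pmeet_def pjoin_def)
      have "l \<bullet> C = 0"
      proof (rule caseC[OF conic N2 l0 hA1 WB_def WC_def ptB lBk cU cX[of 1] cX[of 2] cY[of 1] _ _ _ _ _ C'])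
        show "k \<noteq> N" using 1 by simp
        show "cross3 U (X 1) \<noteq> 0" using dUX N2 by simp
        show "cross3 (X 2) U \<noteq> 0" using cross_sym_ne[OF dUX[of 2]] N2 by simp
        show "cross3 (X 2) (X 1) \<noteq> 0" using dXX[of 2 1] N2 by simp
        show "cross3 U (Y 1) \<noteq> 0" using dUY N2 by simp
        show "cross3 V WC \<noteq> 0" using cross_sym_ne[OF dXV[of N]] cross_sym_ne[OF dYV[of N]] N2
          unfolding WC_def by auto
      qed (use N2 in simp_all)
      thus ?thesis using 1 pts_def by simp
    next
      case 2
      have hA1: "\<forall>i. 1 \<le> i \<and> i < N \<and> True \<longrightarrow> ptok M (A i) (Y i) (Y (Suc i)) (X i) (X (Suc i)) \<and> l \<bullet> A i = 0"
        using ptA lA 2 ptok_swap by auto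
      have B': "B = cross3 (cross3 U (X 1)) (cross3 WB V)" using B_def WB_def by (simp add: pmeet_def pjoin_def)
      have WC': "WC = (if even N then X N else Y N)" by (rule WC_def)
      have WB': "WB = (if even N then Y N else X N)" by (rule WB_def)
      have "l \<bullet> B = 0"
      proof (rule caseC[where X=Y and Y=X and B=C and C=B and WB=WC and WC=WB, OF conic N2 l0 hA1 WC' WB' ptC lCk
            cU cY[of 1] cY[of 2] cX[of 1] _ _ _ _ _ B'])
        show "k \<noteq> N+1" using 2 by simp
        show "cross3 U (Y 1) \<noteq> 0" using dUY N2 by simp
        show "cross3 (Y 2) U \<noteq> 0" using cross_sym_ne[OF dUY[of 2]] N2 by simp
        show "cross3 (Y 2) (Y 1) \<noteq> 0" using dYY[of 2 1] N2 by simp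
        show "cross3 U (X 1) \<noteq> 0" using dUX N2 by simp
        show "cross3 V WB \<noteq> 0" using cross_sym_ne[OF dXV[of N]] cross_sym_ne[OF dYV[of N]] N2
          unfolding WB_def by auto
      qed (use N2 in simp_all)
      thus ?thesis using 2 pts_def by simp
    next
      case 3
      hence k1: "1 \<le> k" and kN: "k < N" by auto
      have ptsk: "pts k = A k" using pts_def kN by simp
      have Ak: "A k = cross3 (cross3 (X k) (X (Suc k))) (cross3 (Y k) (Y (Suc k)))"
        using A_def by (simp add: pmeet_def pjoin_def)
      have lB: "l \<bullet> B = 0" using lBk kN by simp
      have lC: "l \<bullet> C = 0" using lCk kN by simp
      have hAX: "\<forall>i. 1 \<le> i \<and> i < N \<and> i \<noteq> k \<longrightarrow> ptok M (A i) (X i) (X (Suc i)) (Y i) (Y (Suc i)) \<and> l \<bullet> A i = 0"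
        using ptA lA by auto
      have hAY: "\<forall>i. 1 \<le> i \<and> i < N \<and> i \<noteq> k \<longrightarrow> ptok M (A i) (Y i) (Y (Suc i)) (X i) (X (Suc i)) \<and> l \<bullet> A i = 0"
        using ptA lA ptok_swap by auto
      have dXk: "cross3 (X k) (X (Suc k)) \<noteq> 0" using dXX k1 kN by simp
      have dYk: "cross3 (Y k) (Y (Suc k)) \<noteq> 0" using dYY k1 kN by simp
      show ?thesis
      proof (cases "l \<bullet> X k = 0")
        case False
        have "l \<bullet> cross3 (cross3 (X k) (X (Suc k))) (cross3 (Y k) (Y (Suc k))) = 0"
          by (rule caseA[OF conic N2 l0 k1 kN hAX WB_def WC_def ptB lB ptC lC False cX[of k] cX[of "Suc k"] dXk dYk])
             (use k1 kN in simp_all)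
        thus ?thesis using ptsk Ak by simp
      next
        case xk: True
        show ?thesis
        proof (cases "l \<bullet> Y k = 0")
          case False
          have WC': "WC = (if even N then X N else Y N)" by (rule WC_def)
          have WB': "WB = (if even N then Y N else X N)" by (rule WB_def)
          have "l \<bullet> cross3 (cross3 (Y k) (Y (Suc k))) (cross3 (X k) (X (Suc k))) = 0"
            by (rule caseA[where X=Y and Y=X and B=C and C=B and WB=WC and WC=WB,
                  OF conic N2 l0 k1 kN hAY WC' WB' ptC lC ptB lB False cY[of k] cY[of "Suc k"] dYk dXk])
               (use k1 kN in simp_all)
          hence "l \<bullet> cross3 (cross3 (X k) (X (Suc k))) (cross3 (Y k) (Y (Suc k))) = 0"
            by (metis cross_skew inner_minus_right neg_equal_0_iff_equal)
          thus ?thesis using ptsk Ak by simp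
        next
          case yk: True
          show ?thesis
          proof (cases "k = 1")
            case True
            have s1: "sim (rf M B U) (X 1)" and q1: "bf M B B \<noteq> 0" using ptB unfolding ptok_def by auto
            have hB1: "sim (rf M B (X 1)) U" by (rule sim_inv[OF sym q1 s1])
            have x1: "l \<bullet> X 1 = 0" using xk True by simp
            have "l \<bullet> U = 0" by (rule propag[OF lB x1 hB1])
            moreover have "cross3 U (X 1) \<noteq> 0" "cross3 (Y 1) U \<noteq> 0" "cross3 (Y 1) (X 1) \<noteq> 0"
              using dUX[of 1] cross_sym_ne[OF dUY[of 1]] dYX[of 1 1] N2 by auto
            ultimately have False using L3[OF conic cU cX[of 1] cY[of 1] _ _ _ l0 _ xk[unfolded True] yk[unfolded True]] N2 by simp
            thus ?thesis ..
          next
            case False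
            hence k2: "2 \<le> k" using k1 by simp
            have sk: "Suc (k-1) = k" using k2 by simp
            have pA: "ptok M (A (k-1)) (X (k-1)) (X (Suc (k-1))) (Y (k-1)) (Y (Suc (k-1)))" using ptA[of "k-1"] k2 kN by simp
            hence pA': "ptok M (A (k-1)) (X (k-1)) (X k) (Y (k-1)) (Y k)" unfolding sk .
            have s1: "sim (rf M (A (k-1)) (X (k-1))) (X k)" and q1: "bf M (A (k-1)) (A (k-1)) \<noteq> 0"
              using pA' unfolding ptok_def by auto
            have s2: "sim (rf M (A (k-1)) (X k)) (X (k-1))" by (rule sim_inv[OF sym q1 s1])
            have la1: "l \<bullet> A (k-1) = 0" using lA[of "k-1"] k2 kN by simp
            have xk1: "l \<bullet> X (k-1) = 0" by (rule propag[OF la1 xk s2])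
            have "cross3 (X (k-1)) (X k) \<noteq> 0" "cross3 (Y k) (X (k-1)) \<noteq> 0" "cross3 (Y k) (X k) \<noteq> 0"
              using dXX[of "k-1" k] dYX[of k "k-1"] dYX[of k k] k2 kN by auto
            moreover have "1 \<le> k-1" "k-1 \<le> N" "1 \<le> k" "k \<le> N" using k2 kN by auto
            ultimately have False using L3[OF conic cX[of "k-1"] cX[of k] cY[of k] _ _ _ l0 xk1 xk yk] by blast
            thus ?thesis ..
          qed
        qed
      qed
    qed
  qed
  have "\<forall>P\<in>pts ` {1..N+1}. l \<bullet> P = 0"
  proof
    fix P assume "P \<in> pts ` {1..N+1}"
    then obtain i where i: "i \<in> {1..N+1}" "P = pts i" by blast
    show "l \<bullet> P = 0" using hl'[OF i(1)] key i(2) by (cases "i = k") auto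
  qed
  thus ?thesis unfolding proj_collinear_def using l0 by blast
qed


end
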